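(* Let $R$ be a commutative ring and $p$ a prime. Define $I_0=R$ and, for $i>0$, $I_i=\{r\in R: r^p\in pI_{i-1}\}$. Then for each $i\ge0$ the set $I_i$ is an ideal of $R$. *)

theory Defs
  imports "HOL-Algebra.Algebra" "HOL-Computational_Algebra.Primes"
begin

fun Iseq :: "('a, 'b) ring_scheme \<Rightarrow> nat \<Rightarrow> nat \<Rightarrow> 'a set" where
  "Iseq R p 0 = carrier R"
| "Iseq R p (Suc i) =
     {r \<in> carrier R. \<exists>a \<in> Iseq R p i.
        r [^]\<^bsub>R\<^esub> p = (add_pow R p \<one>\<^bsub>R\<^esub>) \<otimes>\<^bsub>R\<^esub> a}"

end

theory Submission
  imports Defs
begin


lemma (in cring) binom:
  assumes a: "a \<in> carrier R" and b: "b \<in> carrier R"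
  shows "(a \<oplus> b) [^] n = (\<Oplus>k\<in>{..n}. add_pow R (n choose k) (a [^] k \<otimes> b [^] (n - k)))"
proof (induction n)
  case 0
  then show ?case using a b by simp
next
  case (Suc n)
  define f where "f k = add_pow R (n choose k) (a [^] Suc k \<otimes> b [^] (n - k))" for k
  define g where "g k = add_pow R (n choose k) (a [^] k \<otimes> b [^] (Suc n - k))" for k
  define F where "F k = add_pow R (Suc n choose k) (a [^] k \<otimes> b [^] (Suc n - k))" for k
  have fc: "\<And>A. f \<in> A \<rightarrow> carrier R" "\<And>A. g \<in> A \<rightarrow> carrier R" "\<And>A. F \<in> A \<rightarrow> carrier R"
    using a b by (auto simp: f_def g_def F_def)
  let ?S = "\<Oplus>k\<in>{..n}. add_pow R (n choose k) (a [^] k \<otimes> b [^] (n - k))"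
  have Sc: "(\<lambda>k. add_pow R (n choose k) (a [^] k \<otimes> b [^] (n - k))) \<in> {..n} \<rightarrow> carrier R"
    using a b by auto
  have "(a \<oplus> b) [^] Suc n = ?S \<otimes> a \<oplus> ?S \<otimes> b"
    using Suc a b by (simp add: r_distr)
  also have "?S \<otimes> a = (\<Oplus>k\<in>{..n}. f k)"
    unfolding finsum_ldistr[OF finite_atMost a Sc]
    apply (rule finsum_cong')
    using a b by (auto simp: f_def add_pow_ldistr add_pow_rdistr m_ac)
  also have "?S \<otimes> b = (\<Oplus>k\<in>{..n}. g k)"
    unfolding finsum_ldistr[OF finite_atMost b Sc]
    apply (rule finsum_cong')
    using a b by (auto simp: g_def add_pow_ldistr add_pow_rdistr m_ac Suc_diff_le)
  also have "(\<Oplus>k\<in>{..n}. g k) = (\<Oplus>k\<in>{..Suc n}. g k)"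
  proof -
    have "g (Suc n) = \<zero>" by (simp add: g_def binomial_eq_0)
    moreover have "(\<Oplus>k\<in>{..n}. g k) \<in> carrier R" using fc by (intro finsum_closed) auto
    ultimately show ?thesis by (simp add: finsum_Suc[OF fc(2)])
  qed
  also have "\<dots> = (\<Oplus>k\<in>{..n}. g (Suc k)) \<oplus> g 0"
    by (rule finsum_Suc2[OF fc(2)])
  finally have L: "(a \<oplus> b) [^] Suc n = (\<Oplus>k\<in>{..n}. f k) \<oplus> ((\<Oplus>k\<in>{..n}. g (Suc k)) \<oplus> g 0)" .
  have eF: "(\<Oplus>k\<in>{..Suc n}. F k) = (\<Oplus>k\<in>{..n}. F (Suc k)) \<oplus> F 0"
    by (rule finsum_Suc2[OF fc(3)])
  have eF2: "(\<Oplus>k\<in>{..n}. F (Suc k)) = (\<Oplus>k\<in>{..n}. f k \<oplus> g (Suc k))"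
    apply (rule finsum_cong')
    using a b by (auto simp: f_def g_def F_def add.nat_pow_mult)
  also have "\<dots> = (\<Oplus>k\<in>{..n}. f k) \<oplus> (\<Oplus>k\<in>{..n}. g (Suc k))"
    by (rule finsum_addf) (use fc in auto)
  finally have eF3: "(\<Oplus>k\<in>{..n}. F (Suc k)) = (\<Oplus>k\<in>{..n}. f k) \<oplus> (\<Oplus>k\<in>{..n}. g (Suc k))" .
  have c1: "(\<Oplus>k\<in>{..n}. f k) \<in> carrier R" "(\<Oplus>k\<in>{..n}. g (Suc k)) \<in> carrier R" "g 0 \<in> carrier R"
    by (rule finsum_closed, use fc in auto)+
  have "F 0 = g 0" by (simp add: F_def g_def)
  show ?case unfolding F_def[symmetric] L eF eF3 \<open>F 0 = g 0\<close>
    using c1 by (simp add: a_ac)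
qed

lemma (in cring) frob:
  assumes a: "a \<in> carrier R" and b: "b \<in> carrier R" and p: "Factorial_Ring.prime (p::nat)"
  shows "\<exists>t\<in>carrier R. (a \<oplus> b) [^] p = a [^] p \<oplus> (b [^] p \<oplus> add_pow R p \<one> \<otimes> (a \<otimes> t))"
proof -
  have p0: "p \<noteq> 0" using p by auto
  define P where "P = add_pow R p \<one>"
  have Pc: "P \<in> carrier R" by (simp add: P_def)
  define h where "h (k::nat) = (if 0 < k \<and> k < p then add_pow R ((p choose k) div p) (a [^] (k - 1) \<otimes> b [^] (p - k)) else \<zero>)" for k
  have hc: "\<And>A. h \<in> A \<rightarrow> carrier R" using a b by (auto simp: h_def)
  define T where "T k = add_pow R (p choose k) (a [^] k \<otimes> b [^] (p - k))" for k
  define U where "U (k::nat) = (if p = k then a [^] p else \<zero>)" for k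
  define V where "V (k::nat) = (if 0 = k then b [^] p else \<zero>)" for k
  define W where "W (k::nat) = P \<otimes> (a \<otimes> h k)" for k
  have Uc: "\<And>A. U \<in> A \<rightarrow> carrier R" using a b by (auto simp: U_def)
  have Vc: "\<And>A. V \<in> A \<rightarrow> carrier R" using a b by (auto simp: V_def)
  have Wc: "\<And>A. W \<in> A \<rightarrow> carrier R" using a b Pc hc by (auto simp: W_def h_def)
  have Uk: "\<And>k. U k \<in> carrier R" "\<And>k. V k \<in> carrier R" "\<And>k. W k \<in> carrier R"
    using funcset_mem[OF Uc, of _ UNIV] funcset_mem[OF Vc, of _ UNIV] funcset_mem[OF Wc, of _ UNIV] by auto
  have TUVW: "T k = U k \<oplus> (V k \<oplus> W k)" if k: "k \<le> p" for k
  proof (cases "k = 0")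
    case True
    then show ?thesis using a b p0 by (simp add: T_def U_def V_def W_def h_def Pc)
  next
    case k0: False
    show ?thesis
    proof (cases "k = p")
      case True
      then show ?thesis using a b p0 by (simp add: T_def U_def V_def W_def h_def Pc)
    next
      case False
      with k k0 have kp: "0 < k" "k < p" by auto
      define q where "q = (p choose k) div p"
      have cq: "p choose k = q * p" unfolding q_def
        using dvd_choose_prime[of k p] kp p by auto
      define y where "y = a [^] (k - 1) \<otimes> b [^] (p - k)"
      have yc: "y \<in> carrier R" using a b by (simp add: y_def)
      have ay: "a \<otimes> y = a [^] k \<otimes> b [^] (p - k)"
      proof -
        have "a [^] k = a \<otimes> a [^] (k - 1)"
          using kp a nat_pow_Suc2[of a "k - 1"] by simp
        then show ?thesis using a b by (simp add: m_assoc y_def)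
      qed
      have "T k = add_pow R p (add_pow R q (a \<otimes> y))"
        unfolding T_def ay[symmetric] cq using add.nat_pow_pow[of "a \<otimes> y" p q] a yc by (simp add: mult.commute)
      also have "\<dots> = P \<otimes> (a \<otimes> add_pow R q y)"
        unfolding P_def using a yc add_pow_ldistr[of \<one> "a \<otimes> add_pow R q y" p] add_pow_rdistr[of a y q]
        by simp
      finally show ?thesis using kp a b Pc yc
        by (simp add: U_def V_def W_def h_def q_def y_def)
    qed
  qed
  have "(a \<oplus> b) [^] p = (\<Oplus>k\<in>{..p}. T k)"
    unfolding binom[OF a b] T_def ..
  also have "\<dots> = (\<Oplus>k\<in>{..p}. U k \<oplus> (V k \<oplus> W k))"
    by (rule finsum_cong') (auto simp: TUVW Uk)
  also have "\<dots> = (\<Oplus>k\<in>{..p}. U k) \<oplus> ((\<Oplus>k\<in>{..p}. V k) \<oplus> (\<Oplus>k\<in>{..p}. W k))"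
    by (simp add: finsum_addf[OF Uc] finsum_addf[OF Vc Wc] Uk)
  also have "(\<Oplus>k\<in>{..p}. U k) = a [^] p"
    unfolding U_def using finsum_singleton[of p "{..p}" "\<lambda>_. a [^] p"] a by simp
  also have "(\<Oplus>k\<in>{..p}. V k) = b [^] p"
    unfolding V_def using finsum_singleton[of 0 "{..p}" "\<lambda>_. b [^] p"] b by simp
  also have "(\<Oplus>k\<in>{..p}. W k) = P \<otimes> (a \<otimes> (\<Oplus>k\<in>{..p}. h k))"
  proof -
    have ah: "(\<lambda>i. a \<otimes> h i) \<in> {..p} \<rightarrow> carrier R"
      using a funcset_mem[OF hc] by auto
    show ?thesis unfolding W_def
      by (simp add: finsum_rdistr[OF finite_atMost a hc] finsum_rdistr[OF finite_atMost Pc ah])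
  qed
  finally show ?thesis unfolding P_def
    by (intro bexI[of _ "\<Oplus>k\<in>{..p}. h k"]) (use finsum_closed[OF hc] in auto)
qed


lemma Iseq_mono: "Iseq R p (Suc i) \<subseteq> Iseq R p i"
proof (induction i)
  case 0
  then show ?case by auto
next
  case (Suc i)
  then show ?case by (auto simp del: Iseq.simps(2) simp add: Iseq.simps(2)[of R p "Suc i"] Iseq.simps(2)[of R p i])
qed

theorem lemma2p2:
  fixes R (structure) and p :: nat and i :: nat
  assumes "cring R" and "Factorial_Ring.prime p"
  shows "ideal (Iseq R p i) R"
proof (induction i)
  case 0
  interpret cring R by fact
  show ?case by (simp add: oneideal)
next
  case (Suc i)
  interpret cring R by fact
  interpret J: ideal "Iseq R p i" R by fact
  have p0: "p \<noteq> 0" using assms(2) by auto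
  define P where "P = add_pow R p \<one>"
  have Pc: "P \<in> carrier R" by (simp add: P_def)
  have mem: "r \<in> Iseq R p (Suc i) \<longleftrightarrow> r \<in> carrier R \<and> (\<exists>a \<in> Iseq R p i. r [^] p = P \<otimes> a)" for r
    by (simp add: P_def)
  have sub: "Iseq R p (Suc i) \<subseteq> carrier R" using mem by auto
  have mono: "Iseq R p (Suc i) \<subseteq> Iseq R p i" by (rule Iseq_mono)
  have lmul: "x \<otimes> r \<in> Iseq R p (Suc i)" if r: "r \<in> Iseq R p (Suc i)" and x: "x \<in> carrier R" for x r
  proof -
    obtain a where a: "a \<in> Iseq R p i" "r [^] p = P \<otimes> a" and rc: "r \<in> carrier R" using r mem by auto
    have ac: "a \<in> carrier R" using a J.Icarr by auto
    have "(x \<otimes> r) [^] p = x [^] p \<otimes> (P \<otimes> a)" using x rc a by (simp add: nat_pow_distrib)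
    also have "\<dots> = P \<otimes> (x [^] p \<otimes> a)" using x ac Pc by (simp add: m_lcomm)
    finally show ?thesis using mem x rc ac a J.I_l_closed[of a "x [^] p"] by auto
  qed
  show ?case
  proof (rule idealI)
    show "ring R" by (rule ring_axioms)
    show "subgroup (Iseq R p (Suc i)) (add_monoid R)"
    proof (rule add.subgroupI)
      show "Iseq R p (Suc i) \<subseteq> carrier R" by (rule sub)
      have "\<zero> [^] p = P \<otimes> \<zero>" using nat_pow_zero[OF p0] Pc by simp
      then have "\<zero> \<in> Iseq R p (Suc i)"
        using mem[of \<zero>] J.zero_closed by blast
      then show "Iseq R p (Suc i) \<noteq> {}" by auto
    next
      fix r assume r: "r \<in> Iseq R p (Suc i)"
      have rc: "r \<in> carrier R" using r sub by auto
      have "\<ominus>\<one> \<otimes> r \<in> Iseq R p (Suc i)" by (rule lmul[OF r]) simp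
      moreover have "\<ominus>\<one> \<otimes> r = \<ominus> r" using rc by (simp add: l_minus)
      ultimately show "\<ominus> r \<in> Iseq R p (Suc i)" by simp
    next
      fix r s assume r: "r \<in> Iseq R p (Suc i)" and s: "s \<in> Iseq R p (Suc i)"
      obtain a where a: "a \<in> Iseq R p i" "r [^] p = P \<otimes> a" and rc: "r \<in> carrier R" using r mem by auto
      obtain b where b: "b \<in> Iseq R p i" "s [^] p = P \<otimes> b" and sc: "s \<in> carrier R" using s mem by auto
      have ac: "a \<in> carrier R" and bc: "b \<in> carrier R" using a b J.Icarr by auto
      obtain t where t: "t \<in> carrier R" "(r \<oplus> s) [^] p = r [^] p \<oplus> (s [^] p \<oplus> P \<otimes> (r \<otimes> t))"
        using frob[OF rc sc assms(2)] unfolding P_def by blast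
      have rJ: "r \<in> Iseq R p i" using r mono by auto
      have rtJ: "r \<otimes> t \<in> Iseq R p i" using J.I_r_closed[OF rJ t(1)] .
      have "(r \<oplus> s) [^] p = P \<otimes> (a \<oplus> (b \<oplus> r \<otimes> t))"
        using t a b ac bc rc Pc by (simp add: r_distr)
      moreover have "a \<oplus> (b \<oplus> r \<otimes> t) \<in> Iseq R p i"
        using J.a_closed a(1) b(1) rtJ by auto
      ultimately show "r \<oplus> s \<in> Iseq R p (Suc i)"
        using mem rc sc by auto
    qed
  next
    fix a x assume "a \<in> Iseq R p (Suc i)" "x \<in> carrier R"
    then show "x \<otimes> a \<in> Iseq R p (Suc i)" by (rule lmul)
  next
    fix a x assume "a \<in> Iseq R p (Suc i)" "x \<in> carrier R"
    then show "a \<otimes> x \<in> Iseq R p (Suc i)" using lmul sub m_comm by (metis subsetD)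
  qed
qed

end
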